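(* Let $f\in\mathcal G$ have compact support in $[0,\infty)$, and suppose $f$ belongs to the closure in $L_2(0,\infty)$ of $\mathcal B(Pf)$. Then every zero $s$ of the Riemann zeta function with $1/2<\Re s<1$ is a zero of the Mellin transform $\hat f$, i.e. $\{s:\zeta(s)=0,\ 1/2<\Re s<1\}\subset\{s:\hat f(s)=0,\ 1/2<\Re s<1\}$.
   Context: A good kernel is a continuously differentiable function $f:[0,\infty)\to\mathbb C$ with $f(x)\to0$ as $x\to\infty$, $f\in L_1(0,\infty)$, and $\int_0^\infty t|f'(t)|\,dt<\infty$; $\mathcal G$ denotes the class of good kernels. For $f\in\mathcal G$ the Müntz operator is $Pf(x):=\sum_{n=1}^\infty f(nx)-\frac1x\int_0^\infty f(t)\,dt$, defined for a.e. $x>0$. For $\lambda>0$, $K_\lambda g(x):=g(\lambda x)$. $\mathcal B(g)$ is the linear span of $\{K_n g:n\in\mathbb N\}$. The Mellin transform is $\hat f(s):=\int_0^\infty t^{s-1}f(t)\,dt$, which for $f\in\mathcal G$ converges absolutely for $0<\Re s<1$. *)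

theory Defs
  imports "HOL-Analysis.Analysis"
begin

definition good_kernel :: "(real \<Rightarrow> complex) \<Rightarrow> bool" where
  "good_kernel f \<longleftrightarrow>
     (\<exists>f'. (\<forall>x\<ge>0. (f has_vector_derivative f' x) (at x within {0..}))
         \<and> continuous_on {0..} f'
         \<and> (\<lambda>t. complex_of_real t * f' t) absolutely_integrable_on {0..})
     \<and> (f \<longlongrightarrow> 0) at_top
     \<and> f absolutely_integrable_on {0..}"

definition muntz :: "(real \<Rightarrow> complex) \<Rightarrow> real \<Rightarrow> complex" where
  "muntz f x = (\<Sum>n. f (real (Suc n) * x)) - complex_of_real (1 / x) * integral {0..} f"

definition dil :: "real \<Rightarrow> (real \<Rightarrow> complex) \<Rightarrow> real \<Rightarrow> complex" where
  "dil l g x = g (l * x)"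

definition Bspan :: "(real \<Rightarrow> complex) \<Rightarrow> (real \<Rightarrow> complex) set" where
  "Bspan g = {h. \<exists>N c. h = (\<lambda>x. \<Sum>n\<in>{1..N}. c n * dil (real n) g x)}"

definition in_L2_closure :: "(real \<Rightarrow> complex) \<Rightarrow> (real \<Rightarrow> complex) set \<Rightarrow> bool" where
  "in_L2_closure f S \<longleftrightarrow>
     (\<forall>e>0. \<exists>h\<in>S. (\<lambda>x. (norm (f x - h x))\<^sup>2) integrable_on {0<..}
                 \<and> integral {0<..} (\<lambda>x. (norm (f x - h x))\<^sup>2) < e)"

definition mellin :: "(real \<Rightarrow> complex) \<Rightarrow> complex \<Rightarrow> complex" where
  "mellin f s = integral {0<..} (\<lambda>t. complex_of_real t powr (s - 1) * f t)"

text \<open>Riemann zeta function on Re s > 0, s not a zero of 1 - 2^(1-s), via the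
  (analytic-continuation) identity zeta(s) = eta(s) / (1 - 2^(1-s)),
  with the Dirichlet eta series, convergent for Re s > 0.\<close>
definition zeta :: "complex \<Rightarrow> complex" where
  "zeta s = (\<Sum>n. (-1) ^ n / of_nat (Suc n) powr s) / (1 - 2 powr (1 - s))"

end

theory Submission
  imports Defs
begin

lemma cpow_mult_pos:
  assumes "0 \<le> a" "0 \<le> b"
  shows "complex_of_real (a*b) powr z = complex_of_real a powr z * complex_of_real b powr z"
  using assms by (simp add: powr_times_real)

lemma norm_cpow: "0 \<le> x \<Longrightarrow> norm (complex_of_real x powr z) = x powr Re z"
  by (simp add: norm_powr_real_powr)

lemma cpow_deriv:
  assumes "0 < x"
  shows "((\<lambda>t. complex_of_real t powr a) has_vector_derivative (a * complex_of_real x powr (a-1))) (at x within S)"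
proof -
  have "((\<lambda>z. z powr a) has_field_derivative (a * complex_of_real x powr (a-1))) (at (complex_of_real x))"
    using assms by (intro has_field_derivative_powr) (auto simp: complex_nonpos_Reals_iff)
  then have d: "((\<lambda>z. z powr a) has_field_derivative (a * complex_of_real x powr (a-1))) (at (complex_of_real x) within complex_of_real ` S)"
    by (rule has_field_derivative_at_within)
  have "(complex_of_real has_vector_derivative 1) (at x within S)"
    by (auto intro!: derivative_eq_intros simp: has_vector_derivative_def fun_eq_iff of_real_def)
  from field_vector_diff_chain_within[OF this d] show ?thesis by (simp add: o_def)
qed

lemma cpow_cont: "continuous_on {0<..} (\<lambda>t. complex_of_real t powr a)"
  by (intro continuous_intros) auto

lemma dom_int:
  fixes A B :: real
  assumes "a > -1" "b < -1" "R > 0"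
  shows "(\<lambda>x. (if x \<le> R then A * x powr a else 0) + (if R \<le> x then B * x powr b else 0)) integrable_on {0<..}"
proof (rule integrable_add)
  have "(\<lambda>x. A * x powr a) integrable_on {0..R}"
    using integrable_on_powr_from_0[of a R] assms by (intro integrable_on_mult_right) auto
  then have "(\<lambda>x. if x \<le> R then A * x powr a else 0) integrable_on {0..R}"
    by (rule integrable_eq) auto
  then show "(\<lambda>x. if x \<le> R then A * x powr a else 0) integrable_on {0<..}"
    by (rule integrable_spike_set) (auto intro: negligible_subset[of "{0}"])
next
  have "(\<lambda>x. B * x powr b) integrable_on {R..}"
    using has_integral_powr_to_inf[of b R] assms by (intro integrable_on_mult_right) (auto simp: integrable_on_def)
  then have "(\<lambda>x. if R \<le> x then B * x powr b else 0) integrable_on {R..}"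
    by (rule integrable_eq) auto
  then show "(\<lambda>x. if R \<le> x then B * x powr b else 0) integrable_on {0<..}"
    by (rule integrable_spike_set) (use assms in auto)
qed

lemma abs_int_cont_bound:
  fixes h :: "real \<Rightarrow> complex"
  assumes "continuous_on {0<..} h" "g integrable_on {0<..}" "\<And>x. 0 < x \<Longrightarrow> norm (h x) \<le> g x"
  shows "h absolutely_integrable_on {0<..}"
  by (rule measurable_bounded_by_integrable_imp_absolutely_integrable[OF
        continuous_imp_measurable_on_sets_lebesgue[OF assms(1)] _ assms(2)]) (use assms in auto)

locale msetup =
  fixes f f' :: "real \<Rightarrow> complex" and R :: real and s :: complex
  assumes deriv: "\<And>x. x \<ge> 0 \<Longrightarrow> (f has_vector_derivative f' x) (at x within {0..})"
    and contf': "continuous_on {0..} f'"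
    and R: "R \<ge> 1" and supp: "\<And>x. x \<ge> R \<Longrightarrow> f x = 0"
    and s1: "1/2 < Re s" and s2: "Re s < 1"
begin

definition c where "c = integral {0..} f"
definition F where "F t = integral {0..t} f"

lemma contf: "continuous_on {0..} f"
  unfolding continuous_on_eq_continuous_within
proof
  fix x :: real assume "x \<in> {0..}"
  then show "continuous (at x within {0..}) f"
    using deriv[of x] by (intro has_vector_derivative_continuous) simp
qed

lemma fbound: obtains M0 where "M0 \<ge> 0" "\<And>x. x \<ge> 0 \<Longrightarrow> norm (f x) \<le> M0"
proof -
  have "compact (f ` {0..R})"
    by (rule compact_continuous_image) (auto intro: continuous_on_subset[OF contf])
  then obtain B where B: "B > 0" "\<And>y. y \<in> f ` {0..R} \<Longrightarrow> norm y \<le> B"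
    using compact_imp_bounded bounded_pos by metis
  show ?thesis
  proof (rule that[of B])
    fix x :: real assume "x \<ge> 0"
    show "norm (f x) \<le> B"
    proof (cases "x \<le> R")
      case True
      then show ?thesis using B(2)[of "f x"] \<open>x \<ge> 0\<close> by simp
    next
      case False
      then show ?thesis using B(1) supp[of x] by simp
    qed
  qed (use B in simp)
qed

lemma flip: obtains M1 where "M1 \<ge> 0" "\<And>x y. x \<in> {0..2*R} \<Longrightarrow> y \<in> {0..2*R} \<Longrightarrow> norm (f x - f y) \<le> M1 * \<bar>x - y\<bar>"
proof -
  have "compact (f' ` {0..2*R})"
    by (rule compact_continuous_image) (auto intro: continuous_on_subset[OF contf'])
  then obtain B where B: "B > 0" "\<And>y. y \<in> f' ` {0..2*R} \<Longrightarrow> norm y \<le> B"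
    using compact_imp_bounded bounded_pos by metis
  have L: "norm (f x - f y) \<le> B * norm (x - y)" if "x \<in> {0..2*R}" "y \<in> {0..2*R}" for x y
  proof (rule differentiable_bound[where S="{0..2*R}" and f'="\<lambda>x h. h *\<^sub>R f' x"])
    fix z assume z: "z \<in> {0..2*R}"
    have "(f has_vector_derivative f' z) (at z within {0..2*R})"
      using deriv[of z] z by (auto intro: has_vector_derivative_within_subset)
    then show "(f has_derivative (\<lambda>h. h *\<^sub>R f' z)) (at z within {0..2*R})"
      by (simp add: has_vector_derivative_def)
    have "onorm (\<lambda>h. h *\<^sub>R f' z) = onorm (\<lambda>h::real. h) * norm (f' z)"
      by (rule onorm_scaleR_left[OF bounded_linear_ident])
    then show "onorm (\<lambda>h. h *\<^sub>R f' z) \<le> B"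
      using B(2)[of "f' z"] z by (simp add: onorm_id)
  next
    show "convex {0..2*R}" by (rule convex_real_interval)
  qed (use that in simp_all)
  show ?thesis
  proof (rule that[of B])
    show "0 \<le> B" using B(1) by simp
    fix x y :: real assume "x \<in> {0..2*R}" "y \<in> {0..2*R}"
    from L[OF this] show "norm (f x - f y) \<le> B * \<bar>x - y\<bar>" by (simp only: real_norm_def)
  qed
qed

lemma f_int: "0 \<le> t \<Longrightarrow> f integrable_on {0..t}"
  by (rule integrable_continuous_interval) (auto intro: continuous_on_subset[OF contf])

lemma f_int': "0 \<le> a \<Longrightarrow> f integrable_on {a..b}"
  by (rule integrable_continuous_interval) (auto intro: continuous_on_subset[OF contf])

lemma F_diff: "0 \<le> a \<Longrightarrow> a \<le> b \<Longrightarrow> F b - F a = integral {a..b} f"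
  unfolding F_def using Henstock_Kurzweil_Integration.integral_combine[where a=0 and c=a and b=b and f=f] f_int[of b] by (simp add: algebra_simps)

lemma F_0: "F 0 = 0" by (simp add: F_def)

lemma F_const: "t \<ge> R \<Longrightarrow> F t = c"
proof -
  assume t: "t \<ge> R"
  have "(f has_integral F t) {0..t}" unfolding F_def using f_int[of t] R t by auto
  then have "(f has_integral F t) {0..}"
    by (rule has_integral_spike_set_eq[THEN iffD1, rotated -1]) (use supp t in \<open>auto intro: negligible_subset[OF negligible_empty]\<close>)
  then show ?thesis unfolding c_def by (simp add: integral_unique)
qed

lemma F_deriv: "0 < x \<Longrightarrow> (F has_vector_derivative f x) (at x)"
proof -
  assume x: "0 < x"
  have "((\<lambda>u. integral {0..u} f) has_vector_derivative f x) (at x within {0..x+1})"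
    by (rule integral_has_vector_derivative) (use x in \<open>auto intro: continuous_on_subset[OF contf]\<close>)
  moreover have "at x within {0..x+1} = at x"
    by (rule at_within_interior) (use x in auto)
  ultimately show ?thesis unfolding F_def[abs_def] by simp
qed

lemma F_cont: "continuous_on {0<..} F"
proof (rule continuous_at_imp_continuous_on, intro ballI)
  fix x :: real assume "x \<in> {0<..}"
  then have "(F has_vector_derivative f x) (at x)" using F_deriv by simp
  then show "isCont F x" by (rule has_vector_derivative_continuous)
qed

lemma F_bound: assumes "M0 \<ge> 0" "\<And>x. x \<ge> 0 \<Longrightarrow> norm (f x) \<le> M0" "0 \<le> t"
  shows "norm (F t) \<le> M0 * t"
proof -
  have "(f has_integral F t) (cbox 0 t)" unfolding F_def using f_int[of t] assms by auto
  moreover have "\<And>x. x \<in> cbox 0 t \<Longrightarrow> norm (f x) \<le> M0" using assms(2) by auto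
  ultimately have "norm (F t) \<le> M0 * measure lborel (cbox 0 t)" by (rule has_integral_bound[OF assms(1)])
  then show ?thesis using assms(3) by simp
qed

end

lemma absint_int: "(f::real \<Rightarrow> complex) absolutely_integrable_on S \<Longrightarrow> f integrable_on S"
  using set_lebesgue_integral_eq_integral(1) by blast

lemma norm_cpow_mult: "0 \<le> x \<Longrightarrow> norm (complex_of_real x powr a * z) = x powr Re a * norm z"
  by (simp add: norm_mult norm_cpow)

lemma improper_ftc0:
  fixes G g :: "real \<Rightarrow> complex"
  assumes g: "g absolutely_integrable_on {0<..}"
    and d: "\<And>x. 0 < x \<Longrightarrow> (G has_vector_derivative g x) (at x)"
    and l0: "(G \<longlongrightarrow> 0) (at_right 0)" and linf: "(G \<longlongrightarrow> 0) at_top"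
  shows "integral {0<..} g = 0"
proof -
  define a where "a k = 1 / real (Suc k)" for k
  define b where "b k = real (Suc k)" for k
  have ab: "0 < a k" "a k \<le> b k" for k
    unfolding a_def b_def by (auto simp: field_simps)
  define fk where "fk k x = (if x \<in> {a k..b k} then g x else 0)" for k x
  have hi: "(fk k has_integral (G (b k) - G (a k))) {0<..}" for k
  proof -
    have "(g has_integral (G (b k) - G (a k))) {a k..b k}"
    proof (rule fundamental_theorem_of_calculus)
      fix x assume "x \<in> {a k..b k}"
      then have "0 < x" using ab[of k] by auto
      then show "(G has_vector_derivative g x) (at x within {a k..b k})"
        using d has_vector_derivative_at_within by blast
    qed (use ab in auto)
    moreover have "{a k..b k} \<subseteq> {0<..}" using ab[of k] by auto
    ultimately show ?thesis unfolding fk_def[abs_def] by (subst has_integral_restrict) auto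
  qed
  have gi: "g integrable_on {0<..}" by (rule absint_int[OF g])
  have ni: "(\<lambda>x. norm (g x)) integrable_on {0<..}"
    using g absolutely_integrable_on_def by blast
  have conv: "(\<lambda>k. fk k x) \<longlonglongrightarrow> g x" if "x \<in> {0<..}" for x
  proof -
    have x: "0 < x" using that by simp
    have "eventually (\<lambda>k. a k < x) sequentially"
    proof -
      have "a \<longlonglongrightarrow> 0" unfolding a_def using LIMSEQ_inverse_real_of_nat by (simp add: inverse_eq_divide)
      from order_tendstoD(2)[OF this x] show ?thesis .
    qed
    moreover have "eventually (\<lambda>k. x < b k) sequentially"
    proof -
      have "filterlim b at_top sequentially" unfolding b_def
        by (rule filterlim_compose[OF filterlim_real_sequentially filterlim_Suc])
      then show ?thesis by (simp add: filterlim_at_top_dense)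
    qed
    ultimately have "eventually (\<lambda>k. fk k x = g x) sequentially"
      by eventually_elim (auto simp: fk_def)
    then show ?thesis by (rule tendsto_eventually)
  qed
  have DC: "(\<lambda>k. integral {0<..} (fk k)) \<longlonglongrightarrow> integral {0<..} g"
    by (rule dominated_convergence(2)[where h="\<lambda>x. norm (g x)"])
       (use hi ni conv in \<open>auto simp: fk_def integrable_on_def\<close>)
  have "(\<lambda>k. G (b k) - G (a k)) \<longlonglongrightarrow> 0 - 0"
  proof (rule tendsto_diff)
    have "filterlim b at_top sequentially" unfolding b_def
      by (rule filterlim_compose[OF filterlim_real_sequentially filterlim_Suc])
    then show "(\<lambda>k. G (b k)) \<longlonglongrightarrow> 0" by (rule filterlim_compose[OF linf])
    have "a \<longlonglongrightarrow> 0" unfolding a_def using LIMSEQ_inverse_real_of_nat by (simp add: inverse_eq_divide)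
    then have "filterlim a (at_right 0) sequentially"
      by (rule tendsto_imp_filterlim_at_right) (use ab in auto)
    then show "(\<lambda>k. G (a k)) \<longlonglongrightarrow> 0" by (rule filterlim_compose[OF l0])
  qed
  moreover have "integral {0<..} (fk k) = G (b k) - G (a k)" for k
    using hi by (rule integral_unique)
  ultimately show ?thesis using DC LIMSEQ_unique by auto
qed

lemma image_mult_pos: "0 < (n::real) \<Longrightarrow> (\<lambda>x. n * x) ` {0<..} = {0<..}"
proof
  assume n: "0 < n"
  show "{0<..} \<subseteq> (\<lambda>x. n * x) ` {0<..}"
  proof
    fix y :: real assume "y \<in> {0<..}"
    then have "y = n * (y / n)" "y / n \<in> {0<..}" using n by auto
    then show "y \<in> (\<lambda>x. n * x) ` {0<..}" by blast
  qed
qed auto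

lemma scale_int:
  fixes H :: "real \<Rightarrow> complex"
  assumes H: "H absolutely_integrable_on {0<..}" and n: "0 < n"
  shows "(\<lambda>x. H (n*x)) absolutely_integrable_on {0<..}"
    "integral {0<..} (\<lambda>x. H (n*x)) = integral {0<..} H / n"
proof -
  have "(\<lambda>x. \<bar>n\<bar> *\<^sub>R H (n*x)) absolutely_integrable_on {0<..} \<and> integral {0<..} (\<lambda>x. \<bar>n\<bar> *\<^sub>R H (n*x)) = integral {0<..} H
        \<longleftrightarrow> H absolutely_integrable_on (\<lambda>x. n*x) ` {0<..} \<and> integral ((\<lambda>x. n*x) ` {0<..}) H = integral {0<..} H"
    by (rule has_absolute_integral_change_of_variables_real)
       (use n in \<open>auto intro!: derivative_eq_intros inj_onI\<close>)
  then have L: "(\<lambda>x. \<bar>n\<bar> *\<^sub>R H (n*x)) absolutely_integrable_on {0<..}"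
    "integral {0<..} (\<lambda>x. \<bar>n\<bar> *\<^sub>R H (n*x)) = integral {0<..} H"
    using H image_mult_pos[OF n] by auto
  have eq: "(\<lambda>x. H (n*x)) = (\<lambda>x. (1/n) *\<^sub>R (\<bar>n\<bar> *\<^sub>R H (n*x)))"
    using n by (auto simp: fun_eq_iff)
  show "(\<lambda>x. H (n*x)) absolutely_integrable_on {0<..}"
    unfolding eq by (rule absolutely_integrable_scaleR_left[OF L(1)])
  show "integral {0<..} (\<lambda>x. H (n*x)) = integral {0<..} H / n"
  proof -
    have "integral {0<..} (\<lambda>x. \<bar>n\<bar> *\<^sub>R H (n*x)) = \<bar>n\<bar> *\<^sub>R integral {0<..} (\<lambda>x. H (n*x))"
      by (rule integral_cmul)
    then have "complex_of_real n * integral {0<..} (\<lambda>x. H (n*x)) = integral {0<..} H"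
      using L(2) n by (simp add: scaleR_conv_of_real)
    then show ?thesis using n by (simp add: field_simps)
  qed
qed

context msetup begin

definition fh where "fh = integral {0<..} (\<lambda>t. complex_of_real t powr (s-1) * f t)"
definition K where "K = integral {0<..} (\<lambda>t. complex_of_real t powr (s-2) * F t)"

lemma MF_int: "(\<lambda>t. complex_of_real t powr (s-1) * f t) absolutely_integrable_on {0<..}"
proof -
  obtain M0 where M0: "M0 \<ge> 0" "\<And>x. x \<ge> 0 \<Longrightarrow> norm (f x) \<le> M0" using fbound by blast
  show ?thesis
  proof (rule abs_int_cont_bound)
    show "continuous_on {0<..} (\<lambda>t. complex_of_real t powr (s-1) * f t)"
      by (intro continuous_on_mult cpow_cont continuous_on_subset[OF contf]) auto
    show "(\<lambda>x. (if x \<le> R then M0 * x powr (Re s - 1) else 0) + (if R \<le> x then 0 * x powr (-2) else 0)) integrable_on {0<..}"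
      by (rule dom_int) (use s1 R in auto)
    fix x :: real assume x: "0 < x"
    show "norm (complex_of_real x powr (s-1) * f x) \<le> (if x \<le> R then M0 * x powr (Re s - 1) else 0) + (if R \<le> x then 0 * x powr (-2) else 0)"
    proof (cases "x \<le> R")
      case True
      have "norm (complex_of_real x powr (s-1) * f x) = x powr (Re s - 1) * norm (f x)"
        using x by (simp add: norm_cpow_mult)
      also have "\<dots> \<le> x powr (Re s - 1) * M0" using M0(2)[of x] x by (intro mult_left_mono) auto
      finally show ?thesis using True by (simp add: mult.commute)
    next
      case False
      then show ?thesis using supp[of x] by simp
    qed
  qed
qed

lemma MK_int: "(\<lambda>t. complex_of_real t powr (s-2) * F t) absolutely_integrable_on {0<..}"
proof -
  obtain M0 where M0: "M0 \<ge> 0" "\<And>x. x \<ge> 0 \<Longrightarrow> norm (f x) \<le> M0" using fbound by blast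
  show ?thesis
  proof (rule abs_int_cont_bound)
    show "continuous_on {0<..} (\<lambda>t. complex_of_real t powr (s-2) * F t)"
      by (intro continuous_on_mult cpow_cont F_cont)
    show "(\<lambda>x. (if x \<le> R then M0 * x powr (Re s - 1) else 0) + (if R \<le> x then norm c * x powr (Re s - 2) else 0)) integrable_on {0<..}"
      by (rule dom_int) (use s1 s2 R in auto)
    fix x :: real assume x: "0 < x"
    have nn: "0 \<le> (if R \<le> x then norm c * x powr (Re s - 2) else 0)"
              "0 \<le> (if x \<le> R then M0 * x powr (Re s - 1) else 0)" using M0 by auto
    have "norm (complex_of_real x powr (s-2) * F x) = x powr (Re s - 2) * norm (F x)"
      using x by (simp add: norm_cpow_mult)
    moreover have "x powr (Re s - 2) * norm (F x) \<le> (if x \<le> R then M0 * x powr (Re s - 1) else 0)" if "x \<le> R"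
    proof -
      have "x powr (Re s - 2) * norm (F x) \<le> x powr (Re s - 2) * (M0 * x)"
        using F_bound[OF M0, of x] x by (intro mult_left_mono) auto
      also have "\<dots> = M0 * (x * x powr (Re s - 2))" by (simp add: mult_ac)
      also have "x * x powr (Re s - 2) = x powr (1 + (Re s - 2))"
        by (rule powr_mult_base) (use x in simp)
      also have "x powr (1 + (Re s - 2)) = x powr (Re s - 1)"
        by (rule arg_cong[where f="\<lambda>e. x powr e"]) simp
      finally show ?thesis using that by simp
    qed
    moreover have "x powr (Re s - 2) * norm (F x) \<le> (if R \<le> x then norm c * x powr (Re s - 2) else 0)" if "R \<le> x"
      using that F_const[of x] by simp
    ultimately show "norm (complex_of_real x powr (s-2) * F x) \<le> (if x \<le> R then M0 * x powr (Re s - 1) else 0) + (if R \<le> x then norm c * x powr (Re s - 2) else 0)"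
      using nn by (cases "x \<le> R"; cases "R \<le> x") auto
  qed
qed

end

lemma cpow_mult_pos':
  assumes "0 \<le> a" "0 \<le> b"
  shows "(complex_of_real a * complex_of_real b) powr z = complex_of_real a powr z * complex_of_real b powr z"
  by (rule powr_times_real) (use assms in auto)

lemma cpow_pos_ne0: "0 < x \<Longrightarrow> complex_of_real x powr a \<noteq> 0"
  by (simp add: powr_def)

context msetup begin

lemma K_rel: "(s - 1) * K + fh = 0"
proof -
  obtain M0 where M0: "M0 \<ge> 0" "\<And>x. x \<ge> 0 \<Longrightarrow> norm (f x) \<le> M0" using fbound by blast
  define G where "G x = complex_of_real x powr (s-1) * F x" for x
  define g where "g x = (s-1) * (complex_of_real x powr (s-2) * F x) + complex_of_real x powr (s-1) * f x" for x
  have gi: "g absolutely_integrable_on {0<..}"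
    unfolding g_def by (intro set_integral_add(1) set_integrable_mult_right MK_int MF_int)
  have "integral {0<..} g = 0"
  proof (rule improper_ftc0[OF gi])
    fix x :: real assume x: "0 < x"
    have "(G has_vector_derivative (complex_of_real x powr (s-1) * f x + ((s-1) * complex_of_real x powr (s-1-1)) * F x)) (at x)"
      unfolding G_def by (rule has_vector_derivative_mult[OF cpow_deriv[OF x] F_deriv[OF x]])
    moreover have "s - 1 - 1 = s - 2" by simp
    ultimately show "(G has_vector_derivative g x) (at x)"
      unfolding g_def by (simp add: algebra_simps)
  next
    show "(G \<longlongrightarrow> 0) (at_right 0)"
    proof (rule Lim_null_comparison)
      show "eventually (\<lambda>x. norm (G x) \<le> M0 * x powr Re s) (at_right 0)"
        using eventually_at_right_less[of "0::real"]
      proof eventually_elim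
        case (elim x)
        have "norm (G x) = x powr (Re s - 1) * norm (F x)"
          unfolding G_def using elim by (simp add: norm_cpow_mult)
        also have "\<dots> \<le> x powr (Re s - 1) * (M0 * x)"
          using F_bound[OF M0, of x] elim by (intro mult_left_mono) auto
        also have "\<dots> = M0 * (x * x powr (Re s - 1))" by (simp add: mult_ac)
        also have "x * x powr (Re s - 1) = x powr (1 + (Re s - 1))"
          by (rule powr_mult_base) (use elim in simp)
        finally show ?case by simp
      qed
      have "((\<lambda>x. x powr Re s) \<longlongrightarrow> 0) (at_right (0::real))"
        by (rule tendsto_zero_powrI) (use s1 in \<open>auto intro: eventually_at_rightI[of 0 1] tendsto_ident_at\<close>)
      then show "((\<lambda>x. M0 * x powr Re s) \<longlongrightarrow> 0) (at_right 0)"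
        by (rule tendsto_mult_right_zero)
    qed
  next
    have "((\<lambda>x. complex_of_real x powr (s-1)) \<longlongrightarrow> 0) at_top"
      by (rule tendsto_neg_powr_complex_of_real) (use s2 in \<open>auto simp: filterlim_ident\<close>)
    then have "((\<lambda>x. complex_of_real x powr (s-1) * c) \<longlongrightarrow> 0) at_top"
      by (rule tendsto_mult_left_zero)
    moreover have "eventually (\<lambda>x. complex_of_real x powr (s-1) * c = G x) at_top"
      using eventually_ge_at_top[of R] by eventually_elim (simp add: G_def F_const)
    ultimately show "(G \<longlongrightarrow> 0) at_top" by (rule Lim_transform_eventually)
  qed
  moreover have "integral {0<..} g = (s-1) * K + fh"
  proof -
    have i1: "(\<lambda>x. (s-1) * (complex_of_real x powr (s-2) * F x)) integrable_on {0<..}"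
      by (rule integrable_on_mult_right[OF absint_int[OF MK_int]])
    have i2: "(\<lambda>x. complex_of_real x powr (s-1) * f x) integrable_on {0<..}"
      by (rule absint_int[OF MF_int])
    show ?thesis unfolding g_def K_def fh_def by (simp add: integral_add[OF i1 i2])
  qed
  ultimately show ?thesis by simp
qed

lemma K_eq: "K = fh / (1 - s)"
proof -
  have "1 - s \<noteq> 0" using s2 by auto
  then show ?thesis using K_rel by (simp add: field_simps)
qed

lemma MF_scale:
  assumes n: "0 < n"
  shows "(\<lambda>x. complex_of_real x powr (s-1) * f (n*x)) absolutely_integrable_on {0<..}"
    "integral {0<..} (\<lambda>x. complex_of_real x powr (s-1) * f (n*x)) = fh / complex_of_real n powr s"
proof -
  define H where "H y = complex_of_real y powr (s-1) * f y" for y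
  have eq: "complex_of_real x powr (s-1) * f (n*x) = complex_of_real n powr (1-s) * H (n*x)" if "0 < x" for x
  proof -
    have "complex_of_real n powr (1-s) * H (n*x) = (complex_of_real n powr (1-s) * complex_of_real n powr (s-1)) * (complex_of_real x powr (s-1) * f (n*x))"
      unfolding H_def using n that by (simp add: cpow_mult_pos' mult_ac)
    also have "complex_of_real n powr (1-s) * complex_of_real n powr (s-1) = 1"
      using n by (simp add: powr_add[symmetric])
    finally show ?thesis by simp
  qed
  have HI: "H absolutely_integrable_on {0<..}" unfolding H_def by (rule MF_int)
  have A: "(\<lambda>x. complex_of_real n powr (1-s) * H (n*x)) absolutely_integrable_on {0<..}"
    by (intro set_integrable_mult_right scale_int(1)[OF HI n])
  have "(\<lambda>x. complex_of_real x powr (s-1) * f (n*x)) absolutely_integrable_on {0<..} \<longleftrightarrow> (\<lambda>x. complex_of_real n powr (1-s) * H (n*x)) absolutely_integrable_on {0<..}"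
    by (rule set_integrable_cong) (auto simp: eq)
  with A show "(\<lambda>x. complex_of_real x powr (s-1) * f (n*x)) absolutely_integrable_on {0<..}" by simp
  have "integral {0<..} (\<lambda>x. complex_of_real x powr (s-1) * f (n*x)) = integral {0<..} (\<lambda>x. complex_of_real n powr (1-s) * H (n*x))"
    by (rule integral_cong) (use eq in auto)
  also have "\<dots> = complex_of_real n powr (1-s) * (fh / n)"
  proof -
    have "integral {0<..} H = fh" by (simp add: fh_def H_def[abs_def])
    then show ?thesis using scale_int(2)[OF HI n] by simp
  qed
  also have "\<dots> = fh / complex_of_real n powr s"
    using n by (simp add: powr_diff field_simps cpow_pos_ne0)
  finally show "integral {0<..} (\<lambda>x. complex_of_real x powr (s-1) * f (n*x)) = fh / complex_of_real n powr s" .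
qed

lemma MK_scale:
  assumes n: "0 < n"
  shows "(\<lambda>x. complex_of_real x powr (s-2) * F (n*x)) absolutely_integrable_on {0<..}"
    "integral {0<..} (\<lambda>x. complex_of_real x powr (s-2) * F (n*x)) = complex_of_real n powr (1-s) * K"
proof -
  define H where "H y = complex_of_real y powr (s-2) * F y" for y
  have eq: "complex_of_real x powr (s-2) * F (n*x) = complex_of_real n powr (2-s) * H (n*x)" if "0 < x" for x
  proof -
    have "complex_of_real n powr (2-s) * H (n*x) = (complex_of_real n powr (2-s) * complex_of_real n powr (s-2)) * (complex_of_real x powr (s-2) * F (n*x))"
      unfolding H_def using n that by (simp add: cpow_mult_pos' mult_ac)
    also have "complex_of_real n powr (2-s) * complex_of_real n powr (s-2) = 1"
      using n by (simp add: powr_add[symmetric])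
    finally show ?thesis by simp
  qed
  have HI: "H absolutely_integrable_on {0<..}" unfolding H_def by (rule MK_int)
  have A: "(\<lambda>x. complex_of_real n powr (2-s) * H (n*x)) absolutely_integrable_on {0<..}"
    by (intro set_integrable_mult_right scale_int(1)[OF HI n])
  have "(\<lambda>x. complex_of_real x powr (s-2) * F (n*x)) absolutely_integrable_on {0<..} \<longleftrightarrow> (\<lambda>x. complex_of_real n powr (2-s) * H (n*x)) absolutely_integrable_on {0<..}"
    by (rule set_integrable_cong) (auto simp: eq)
  with A show "(\<lambda>x. complex_of_real x powr (s-2) * F (n*x)) absolutely_integrable_on {0<..}" by simp
  have "integral {0<..} (\<lambda>x. complex_of_real x powr (s-2) * F (n*x)) = integral {0<..} (\<lambda>x. complex_of_real n powr (2-s) * H (n*x))"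
    by (rule integral_cong) (use eq in auto)
  also have "\<dots> = complex_of_real n powr (2-s) * (K / n)"
  proof -
    have "integral {0<..} H = K" by (simp add: K_def H_def[abs_def])
    then show ?thesis using scale_int(2)[OF HI n] by simp
  qed
  also have "complex_of_real n powr (2-s) = complex_of_real n powr (1-s) * complex_of_real n"
  proof -
    have "complex_of_real n powr (2-s) = complex_of_real n powr ((1-s) + 1)"
      by (rule arg_cong[where f="\<lambda>e. complex_of_real n powr e"]) simp
    also have "\<dots> = complex_of_real n powr (1-s) * complex_of_real n powr 1" by (rule powr_add)
    finally show ?thesis by simp
  qed
  finally show "integral {0<..} (\<lambda>x. complex_of_real x powr (s-2) * F (n*x)) = complex_of_real n powr (1-s) * K"
    using n by simp
qed

end

context msetup begin

definition T where
  "T N x = (\<Sum>n\<in>{1..N}. complex_of_real x powr (s-1) * f (real n * x)) - complex_of_real x powr (s-2) * F (real N * x)"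

lemma T_int:
  "T N absolutely_integrable_on {0<..}"
  "integral {0<..} (T N) = (\<Sum>n\<in>{1..N}. fh / complex_of_real (real n) powr s) - complex_of_real (real N) powr (1-s) * K"
proof -
  have A1: "(\<lambda>x. \<Sum>n\<in>{1..N}. complex_of_real x powr (s-1) * f (real n * x)) absolutely_integrable_on {0<..}"
    by (intro absolutely_integrable_sum MF_scale(1)) auto
  have I1: "integral {0<..} (\<lambda>x. \<Sum>n\<in>{1..N}. complex_of_real x powr (s-1) * f (real n * x)) = (\<Sum>n\<in>{1..N}. fh / complex_of_real (real n) powr s)"
    by (subst integral_sum) (auto intro!: absint_int MF_scale(1) simp: MF_scale(2))
  show "T N absolutely_integrable_on {0<..}"
  proof (cases "N = 0")
    case True
    then show ?thesis by (simp add: T_def[abs_def] F_0)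
  next
    case False
    then have N: "0 < real N" by simp
    show ?thesis unfolding T_def[abs_def]
      by (intro set_integral_diff(1) A1 MK_scale(1)[OF N])
  qed
  show "integral {0<..} (T N) = (\<Sum>n\<in>{1..N}. fh / complex_of_real (real n) powr s) - complex_of_real (real N) powr (1-s) * K"
  proof (cases "N = 0")
    case True
    then show ?thesis by (simp add: T_def[abs_def] F_0)
  next
    case False
    then have N: "0 < real N" by simp
    have "integral {0<..} (T N) = integral {0<..} (\<lambda>x. \<Sum>n\<in>{1..N}. complex_of_real x powr (s-1) * f (real n * x)) - integral {0<..} (\<lambda>x. complex_of_real x powr (s-2) * F (real N * x))"
      unfolding T_def[abs_def] by (rule integral_diff[OF absint_int[OF A1] absint_int[OF MK_scale(1)[OF N]]])
    then show ?thesis using I1 MK_scale(2)[OF N] by simp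
  qed
qed

definition d where "d n x = f (real n * x) - (F (real n * x) - F ((real n - 1) * x)) / complex_of_real x"

lemma telescope: "(\<Sum>n\<in>{1..N}. (F (real n * x) - F ((real n - 1) * x))) = F (real N * x)"
proof (induction N)
  case 0
  then show ?case by (simp add: F_0)
next
  case (Suc N)
  have "(\<Sum>n\<in>{1..Suc N}. (F (real n * x) - F ((real n - 1) * x))) = (\<Sum>n\<in>{1..N}. (F (real n * x) - F ((real n - 1) * x))) + (F (real (Suc N) * x) - F ((real (Suc N) - 1) * x))"
    by simp
  also have "real (Suc N) - 1 = real N" by simp
  finally show ?case using Suc by simp
qed

lemma T_eq_d: "0 < x \<Longrightarrow> T N x = complex_of_real x powr (s-1) * (\<Sum>n\<in>{1..N}. d n x)"
proof -
  assume x: "0 < x"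
  have "(\<Sum>n\<in>{1..N}. d n x) = (\<Sum>n\<in>{1..N}. f (real n * x)) - (\<Sum>n\<in>{1..N}. (F (real n * x) - F ((real n - 1) * x))) / complex_of_real x"
  proof -
    have "(\<Sum>n\<in>{1..N}. d n x) = (\<Sum>n\<in>{1..N}. f (real n * x)) - (\<Sum>n\<in>{1..N}. (F (real n * x) - F ((real n - 1) * x)) / complex_of_real x)"
      unfolding d_def by (rule sum_subtractf)
    then show ?thesis by (simp add: sum_divide_distrib)
  qed
  also have "\<dots> = (\<Sum>n\<in>{1..N}. f (real n * x)) - F (real N * x) / complex_of_real x"
    by (simp only: telescope)
  finally have e: "(\<Sum>n\<in>{1..N}. d n x) = (\<Sum>n\<in>{1..N}. f (real n * x)) - F (real N * x) / complex_of_real x" .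
  have p: "complex_of_real x powr (s-2) = complex_of_real x powr (s-1) / complex_of_real x"
  proof -
    have "complex_of_real x powr (s-2) = complex_of_real x powr ((s-1) - 1)"
      by (rule arg_cong[where f="\<lambda>e. complex_of_real x powr e"]) simp
    also have "\<dots> = complex_of_real x powr (s-1) / complex_of_real x powr 1" by (rule powr_diff)
    finally show ?thesis by simp
  qed
  show ?thesis unfolding T_def e p by (simp add: sum_distrib_left right_diff_distrib)
qed

lemma d_bound:
  assumes "M1 \<ge> 0" and M1: "\<And>x y. x \<in> {0..2*R} \<Longrightarrow> y \<in> {0..2*R} \<Longrightarrow> norm (f x - f y) \<le> M1 * \<bar>x - y\<bar>"
    and x: "0 < x" "x \<le> R" and n: "1 \<le> n"
  shows "norm (d n x) \<le> (if (real n - 1) * x < R then M1 * x else 0)"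
proof (cases "(real n - 1) * x < R")
  case False
  have a: "0 \<le> (real n - 1) * x" using n x by simp
  have "real n * x \<ge> (real n - 1) * x" using x by (simp add: algebra_simps)
  then have "d n x = 0" using False unfolding d_def by (simp add: supp F_const)
  then show ?thesis using False by simp
next
  case True
  define a where "a = (real n - 1) * x"
  define b where "b = real n * x"
  have ab: "0 \<le> a" "a \<le> b" "b - a = x" "b \<le> 2*R" using n x True by (auto simp: a_def b_def algebra_simps)
  have "((\<lambda>t. f b) has_integral (b - a) *\<^sub>R f b) {a..b}"
    using has_integral_const_real[of "f b" a b] ab by simp
  then have "((\<lambda>t. f b - f t) has_integral ((b - a) *\<^sub>R f b - integral {a..b} f)) {a..b}"
    by (intro has_integral_diff integrable_integral f_int') (use ab in auto)
  then have hi: "((\<lambda>t. f b - f t) has_integral (x *\<^sub>R f b - (F b - F a))) {a..b}"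
    using ab F_diff[of a b] by simp
  have "norm (x *\<^sub>R f b - (F b - F a)) \<le> (M1 * x) * measure lborel (cbox a b)"
  proof (rule has_integral_bound)
    show "0 \<le> M1 * x" using assms x by simp
    show "((\<lambda>t. f b - f t) has_integral (x *\<^sub>R f b - (F b - F a))) (cbox a b)" using hi by simp
    fix t assume "t \<in> cbox a b"
    then have t: "a \<le> t" "t \<le> b" by auto
    have "norm (f b - f t) \<le> M1 * \<bar>b - t\<bar>" by (rule M1) (use ab t in auto)
    also have "\<dots> \<le> M1 * x" using ab t assms(1) by (intro mult_left_mono) auto
    finally show "norm (f b - f t) \<le> M1 * x" .
  qed
  also have "measure lborel (cbox a b) = x" using ab by simp
  finally have nb: "norm (x *\<^sub>R f b - (F b - F a)) \<le> M1 * x * x" .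
  have "d n x = (x *\<^sub>R f b - (F b - F a)) / complex_of_real x"
    unfolding d_def a_def b_def using x by (simp add: field_simps scaleR_conv_of_real)
  then have "norm (d n x) = norm (x *\<^sub>R f b - (F b - F a)) / x"
    using x by (simp add: norm_divide)
  also have "\<dots> \<le> M1 * x * x / x" using nb x by (intro divide_right_mono) auto
  finally show ?thesis using True x by simp
qed

end

lemma card_bound:
  assumes x: "0 < x" and R: "0 < R"
  shows "real (card {n\<in>{1..N}. (real n - 1) * x < R}) \<le> R / x + 1"
proof -
  define m where "m = nat \<lceil>R / x\<rceil>"
  have sub: "{n\<in>{1..N}. (real n - 1) * x < R} \<subseteq> {1..m}"
  proof
    fix n assume "n \<in> {n\<in>{1..N}. (real n - 1) * x < R}"
    then have n: "1 \<le> n" "(real n - 1) * x < R" by auto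
    then have "real n - 1 < R / x" using x by (simp add: pos_less_divide_eq)
    also have "R / x \<le> real_of_int \<lceil>R / x\<rceil>" by (rule le_of_int_ceiling)
    finally have "int n < \<lceil>R / x\<rceil> + 1" by linarith
    then have "n \<le> m" unfolding m_def by linarith
    then show "n \<in> {1..m}" using n by auto
  qed
  have "card {n\<in>{1..N}. (real n - 1) * x < R} \<le> card {1..m}"
    by (rule card_mono[OF _ sub]) simp
  then have "real (card {n\<in>{1..N}. (real n - 1) * x < R}) \<le> real m" by simp
  also have "real m \<le> R / x + 1"
  proof -
    have "0 \<le> R / x" using x R by simp
    then have "real m = real_of_int \<lceil>R / x\<rceil>" unfolding m_def by simp
    also have "\<dots> \<le> R / x + 1" by linarith
    finally show ?thesis .
  qed
  finally show ?thesis .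
qed

context msetup begin

definition Dm where
  "Dm M1 x = (if x \<le> R then 2*M1*R * x powr (Re s - 1) else 0) + (if R \<le> x then norm c * x powr (Re s - 2) else 0)"

lemma T_bound:
  assumes M1p: "M1 \<ge> 0" and M1: "\<And>x y. x \<in> {0..2*R} \<Longrightarrow> y \<in> {0..2*R} \<Longrightarrow> norm (f x - f y) \<le> M1 * \<bar>x - y\<bar>"
    and x: "0 < x"
  shows "norm (T N x) \<le> Dm M1 x"
proof (cases "x \<le> R")
  case True
  have "norm (\<Sum>n\<in>{1..N}. d n x) \<le> (\<Sum>n\<in>{1..N}. (if (real n - 1) * x < R then M1 * x else 0))"
    by (rule sum_norm_le) (rule d_bound[OF M1p M1 x True], auto)
  also have "\<dots> = (\<Sum>n\<in>{n\<in>{1..N}. (real n - 1) * x < R}. M1 * x)"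
    by (rule sum.inter_filter[symmetric]) simp
  also have "\<dots> = real (card {n\<in>{1..N}. (real n - 1) * x < R}) * (M1 * x)" by simp
  also have "\<dots> \<le> (R / x + 1) * (M1 * x)"
    using card_bound[OF x, of R N] R M1p x by (intro mult_right_mono) auto
  also have "\<dots> = M1 * (R + x)" using x by (simp add: field_simps)
  also have "\<dots> \<le> 2 * M1 * R" using True M1p by (simp add: algebra_simps mult_left_mono)
  finally have sb: "norm (\<Sum>n\<in>{1..N}. d n x) \<le> 2 * M1 * R" .
  have "norm (T N x) = x powr (Re s - 1) * norm (\<Sum>n\<in>{1..N}. d n x)"
    using x by (simp add: T_eq_d norm_cpow_mult)
  also have "\<dots> \<le> x powr (Re s - 1) * (2 * M1 * R)" using sb by (intro mult_left_mono) auto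
  also have "\<dots> \<le> Dm M1 x" using True M1p R unfolding Dm_def by (simp add: mult_ac)
  finally show ?thesis .
next
  case False
  have z: "f (real n * x) = 0" if "n \<in> {1..N}" for n
  proof -
    have "x \<le> real n * x" using that x by simp
    then show ?thesis using False by (intro supp) simp
  qed
  have "norm (F (real N * x)) \<le> norm c"
  proof (cases "N = 0")
    case True then show ?thesis by (simp add: F_0)
  next
    case False
    then have "x \<le> real N * x" using x by simp
    then show ?thesis using \<open>\<not> x \<le> R\<close> by (simp add: F_const)
  qed
  moreover have "T N x = - (complex_of_real x powr (s-2) * F (real N * x))"
    unfolding T_def using z by simp
  ultimately have "norm (T N x) \<le> x powr (Re s - 2) * norm c"
    using x by (simp add: norm_cpow_mult mult_left_mono)
  then show ?thesis using False unfolding Dm_def by (simp add: mult_ac)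
qed

lemma T_lim:
  assumes x: "0 < x"
  shows "(\<lambda>N. T N x) \<longlonglongrightarrow> complex_of_real x powr (s-1) * muntz f x"
proof -
  define N0 where "N0 = nat \<lceil>R / x\<rceil>"
  have N0x: "R \<le> real N0 * x"
  proof -
    have "R / x \<le> real N0" unfolding N0_def by linarith
    then show ?thesis using x by (simp add: pos_divide_le_eq)
  qed
  have z: "f (real n * x) = 0" if "N0 < n" for n
  proof -
    have "real N0 * x \<le> real n * x" using that x by simp
    then show ?thesis using N0x by (intro supp) simp
  qed
  have mu: "muntz f x = (\<Sum>n<N0. f (real (Suc n) * x)) - complex_of_real (1/x) * c"
  proof -
    have "(\<Sum>n. f (real (Suc n) * x)) = (\<Sum>n\<in>{..<N0}. f (real (Suc n) * x))"
    proof (rule suminf_finite)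
      fix n assume "n \<notin> {..<N0}"
      then have "N0 < Suc n" by simp
      then show "f (real (Suc n) * x) = 0" by (rule z)
    qed simp
    then show ?thesis unfolding muntz_def c_def by simp
  qed
  have "eventually (\<lambda>N. T N x = complex_of_real x powr (s-1) * muntz f x) sequentially"
    using eventually_ge_at_top[of N0]
  proof eventually_elim
    case (elim N)
    have "real N0 * x \<le> real N * x" using elim x by simp
    then have FN: "F (real N * x) = c" using N0x by (intro F_const) simp
    have "(\<Sum>n\<in>{1..N}. f (real n * x)) = (\<Sum>n\<in>{1..N0}. f (real n * x))"
    proof (rule sum.mono_neutral_right)
      show "{1..N0} \<subseteq> {1..N}" using elim by auto
    qed (auto intro: z)
    also have "\<dots> = (\<Sum>n<N0. f (real (Suc n) * x))"
      using sum.atLeast1_atMost_eq[of "\<lambda>n. f (real n * x)" N0] by simp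
    finally have sE: "(\<Sum>n\<in>{1..N}. f (real n * x)) = (\<Sum>n<N0. f (real (Suc n) * x))" .
    have p: "complex_of_real x powr (s-2) = complex_of_real x powr (s-1) / complex_of_real x"
    proof -
      have "complex_of_real x powr (s-2) = complex_of_real x powr ((s-1) - 1)"
        by (rule arg_cong[where f="\<lambda>e. complex_of_real x powr e"]) simp
      also have "\<dots> = complex_of_real x powr (s-1) / complex_of_real x powr 1" by (rule powr_diff)
      finally show ?thesis by simp
    qed
    have "T N x = complex_of_real x powr (s-1) * (\<Sum>n\<in>{1..N}. f (real n * x)) - complex_of_real x powr (s-1) / complex_of_real x * c"
      unfolding T_def FN p by (simp only: sum_distrib_left)
    also have "\<dots> = complex_of_real x powr (s-1) * ((\<Sum>n<N0. f (real (Suc n) * x)) - complex_of_real (1/x) * c)"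
      unfolding sE by (simp add: right_diff_distrib divide_inverse mult_ac)
    finally show ?case unfolding mu .
  qed
  then show ?thesis by (rule tendsto_eventually)
qed

lemma P_int:
  "(\<lambda>x. complex_of_real x powr (s-1) * muntz f x) absolutely_integrable_on {0<..}"
  "(\<lambda>N. integral {0<..} (T N)) \<longlonglongrightarrow> integral {0<..} (\<lambda>x. complex_of_real x powr (s-1) * muntz f x)"
proof -
  obtain M1 where M1p: "M1 \<ge> 0" and M1: "\<And>x y. x \<in> {0..2*R} \<Longrightarrow> y \<in> {0..2*R} \<Longrightarrow> norm (f x - f y) \<le> M1 * \<bar>x - y\<bar>"
    using flip by blast
  have Di: "Dm M1 integrable_on {0<..}"
    unfolding Dm_def[abs_def] by (rule dom_int) (use s1 s2 R in auto)
  have DC: "(\<lambda>x. complex_of_real x powr (s-1) * muntz f x) integrable_on {0<..}"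
    "(\<lambda>N. integral {0<..} (T N)) \<longlonglongrightarrow> integral {0<..} (\<lambda>x. complex_of_real x powr (s-1) * muntz f x)"
  proof -
    have i1: "\<And>k. T k integrable_on {0<..}" using absint_int[OF T_int(1)] .
    have b1: "\<And>k x. x \<in> {0<..} \<Longrightarrow> norm (T k x) \<le> Dm M1 x" using T_bound[OF M1p M1] by simp
    have c1: "\<And>x. x \<in> {0<..} \<Longrightarrow> (\<lambda>k. T k x) \<longlonglongrightarrow> complex_of_real x powr (s-1) * muntz f x"
      using T_lim by simp
    show "(\<lambda>x. complex_of_real x powr (s-1) * muntz f x) integrable_on {0<..}"
      by (rule dominated_convergence(1)[OF i1 Di b1 c1])
    show "(\<lambda>N. integral {0<..} (T N)) \<longlonglongrightarrow> integral {0<..} (\<lambda>x. complex_of_real x powr (s-1) * muntz f x)"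
      by (rule dominated_convergence(2)[OF i1 Di b1 c1])
  qed
  show "(\<lambda>N. integral {0<..} (T N)) \<longlonglongrightarrow> integral {0<..} (\<lambda>x. complex_of_real x powr (s-1) * muntz f x)"
    by (rule DC(2))
  show "(\<lambda>x. complex_of_real x powr (s-1) * muntz f x) absolutely_integrable_on {0<..}"
  proof (rule absolutely_integrable_integrable_bound[OF _ DC(1) Di])
    fix x :: real assume "x \<in> {0<..}"
    then have x: "0 < x" by simp
    show "norm (complex_of_real x powr (s-1) * muntz f x) \<le> Dm M1 x"
      by (rule Lim_norm_ubound[OF _ T_lim[OF x]]) (use T_bound[OF M1p M1 x] in auto)
  qed
qed

end

lemma even_odd_lim:
  fixes X :: "nat \<Rightarrow> 'a::real_normed_vector"
  assumes e: "(\<lambda>n. X (2*n)) \<longlonglongrightarrow> l" and o: "(\<lambda>n. X (Suc (2*n))) \<longlonglongrightarrow> l"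
  shows "X \<longlonglongrightarrow> l"
proof (rule LIMSEQ_I)
  fix r :: real assume r: "0 < r"
  from LIMSEQ_D[OF e r] obtain N1 where N1: "\<And>n. n \<ge> N1 \<Longrightarrow> norm (X (2*n) - l) < r" by blast
  from LIMSEQ_D[OF o r] obtain N2 where N2: "\<And>n. n \<ge> N2 \<Longrightarrow> norm (X (Suc (2*n)) - l) < r" by blast
  show "\<exists>no. \<forall>n\<ge>no. norm (X n - l) < r"
  proof (intro exI allI impI)
    fix n assume n: "n \<ge> 2*(N1+N2)"
    show "norm (X n - l) < r"
    proof (cases "even n")
      case True
      then have "n = 2 * (n div 2)" by simp
      moreover have "n div 2 \<ge> N1" using n by presburger
      ultimately show ?thesis using N1 by metis
    next
      case False
      then have "n = Suc (2 * (n div 2))" by presburger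
      moreover have "n div 2 \<ge> N2" using n by presburger
      ultimately show ?thesis using N2 by metis
    qed
  qed
qed

definition Hs :: "complex \<Rightarrow> nat \<Rightarrow> complex" where
  "Hs s N = (\<Sum>n\<in>{1..N}. 1 / of_nat n powr s)"

definition Es :: "complex \<Rightarrow> nat \<Rightarrow> complex" where
  "Es s M = (\<Sum>n<M. (-1) ^ n / of_nat (Suc n) powr s)"

lemma of_nat_cpow_mult: "(of_nat (a*b) :: complex) powr z = of_nat a powr z * of_nat b powr z"
proof -
  have "(of_nat (a*b) :: complex) = complex_of_real (real a) * complex_of_real (real b)" by simp
  then show ?thesis by (simp only: powr_times_real) (simp add: powr_times_real)
qed

lemma Es_even: "Es s (2*N) = Hs s (2*N) - 2 powr (1-s) * Hs s N"
proof (induction N)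
  case 0
  then show ?case by (simp add: Es_def Hs_def)
next
  case (Suc N)
  have e1: "Es s (2 * Suc N) = Es s (2*N) + 1 / of_nat (Suc (2*N)) powr s - 1 / of_nat (Suc (Suc (2*N))) powr s"
    by (simp add: Es_def)
  have h1: "Hs s (2 * Suc N) = Hs s (2*N) + 1 / of_nat (Suc (2*N)) powr s + 1 / of_nat (Suc (Suc (2*N))) powr s"
    by (simp add: Hs_def add.assoc)
  have h2: "Hs s (Suc N) = Hs s N + 1 / of_nat (Suc N) powr s"
    by (simp add: Hs_def)
  have "(of_nat (Suc (Suc (2*N))) :: complex) powr s = of_nat (2 * Suc N) powr s" by simp
  also have "\<dots> = 2 powr s * of_nat (Suc N) powr s"
    using of_nat_cpow_mult[of 2 "Suc N" s] by simp
  finally have q: "(of_nat (Suc (Suc (2*N))) :: complex) powr s = 2 powr s * of_nat (Suc N) powr s" .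
  have t2: "(2::complex) powr (1-s) = 2 / 2 powr s"
    by (simp add: powr_diff)
  have nz: "(2::complex) powr s \<noteq> 0" "(of_nat (Suc N) :: complex) powr s \<noteq> 0"
    using cpow_pos_ne0[of "real (Suc N)" s] by (auto simp: powr_def)
  have "2 powr (1-s) * (1 / of_nat (Suc N) powr s) = 2 * (1 / of_nat (Suc (Suc (2*N))) powr s)"
    unfolding t2 q using nz by (simp add: field_simps)
  then show ?case
    unfolding e1 h1 h2 Suc.IH by (simp add: algebra_simps)
qed

lemma zeta_from_limit:
  assumes s0: "0 < Re s" and s1: "Re s < 1"
    and lim: "(\<lambda>N. Hs s N - of_nat N powr (1-s) / (1-s)) \<longlonglongrightarrow> L"
  shows "zeta s = L"
proof -
  define A where "A N = Hs s N - of_nat N powr (1-s) / (1-s)" for N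
  have p2: "(of_nat (2*N) :: complex) powr (1-s) = 2 powr (1-s) * of_nat N powr (1-s)" for N
    using of_nat_cpow_mult[of 2 N "1-s"] by simp
  have Ee: "Es s (2*N) = A (2*N) - 2 powr (1-s) * A N" for N
    unfolding Es_even A_def p2 by (simp add: algebra_simps)
  have LA: "A \<longlonglongrightarrow> L" using lim unfolding A_def .
  have LA2: "(\<lambda>N. A (2*N)) \<longlonglongrightarrow> L"
    by (rule filterlim_compose[OF LA]) (simp add: filterlim_subseq strict_mono_def)
  have E1: "(\<lambda>N. Es s (2*N)) \<longlonglongrightarrow> L - 2 powr (1-s) * L"
    unfolding Ee by (intro tendsto_intros LA2 LA)
  have tz: "(\<lambda>N. 1 / (of_nat (Suc (2*N)) :: complex) powr s) \<longlonglongrightarrow> 0"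
  proof -
    have "(\<lambda>N. (of_nat (Suc (2*N)) :: complex) powr (-s)) \<longlonglongrightarrow> 0"
      by (rule tendsto_neg_powr_complex_of_nat) (use s0 in \<open>auto intro!: filterlim_subseq simp: strict_mono_def\<close>)
    then show ?thesis by (simp add: powr_minus_divide)
  qed
  have E2: "(\<lambda>N. Es s (Suc (2*N))) \<longlonglongrightarrow> L - 2 powr (1-s) * L"
  proof -
    have "Es s (Suc (2*N)) = Es s (2*N) + 1 / of_nat (Suc (2*N)) powr s" for N
      by (simp add: Es_def)
    then show ?thesis using tendsto_add[OF E1 tz] by simp
  qed
  have "Es s \<longlonglongrightarrow> L - 2 powr (1-s) * L" by (rule even_odd_lim[OF E1 E2])
  then have "(\<lambda>n. (-1) ^ n / of_nat (Suc n) powr s :: complex) sums (L - 2 powr (1-s) * L)"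
    unfolding sums_def Es_def .
  then have su: "(\<Sum>n. (-1) ^ n / of_nat (Suc n) powr s :: complex) = (1 - 2 powr (1-s)) * L"
    by (simp add: sums_unique[symmetric] algebra_simps)
  have "(2::complex) powr (1-s) \<noteq> 1"
  proof
    assume "(2::complex) powr (1-s) = 1"
    then have "norm ((2::complex) powr (1-s)) = 1" by simp
    moreover have "norm ((2::complex) powr (1-s)) = 2 powr (Re (1-s))"
      using norm_cpow[of 2 "1-s"] by simp
    moreover have "(2::real) powr (Re (1-s)) > 1" using s1 by (intro gr_one_powr) auto
    ultimately show False by simp
  qed
  then have "1 - (2::complex) powr (1-s) \<noteq> 0" by simp
  then show ?thesis unfolding zeta_def su by simp
qed

lemma cpow_scale:
  fixes Q :: "real \<Rightarrow> complex"
  assumes G: "(\<lambda>y. complex_of_real y powr a * Q y) absolutely_integrable_on {0<..}" and n: "0 < n"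
  shows "(\<lambda>x. complex_of_real x powr a * Q (n*x)) absolutely_integrable_on {0<..}"
    "integral {0<..} (\<lambda>x. complex_of_real x powr a * Q (n*x)) = complex_of_real n powr (-a) * (integral {0<..} (\<lambda>y. complex_of_real y powr a * Q y) / n)"
proof -
  define H where "H y = complex_of_real y powr a * Q y" for y
  have eq: "complex_of_real x powr a * Q (n*x) = complex_of_real n powr (-a) * H (n*x)" if "0 < x" for x
  proof -
    have "complex_of_real n powr (-a) * H (n*x) = (complex_of_real n powr (-a) * complex_of_real n powr a) * (complex_of_real x powr a * Q (n*x))"
      unfolding H_def using n that by (simp add: cpow_mult_pos' mult_ac)
    also have "complex_of_real n powr (-a) * complex_of_real n powr a = 1"
      using n by (simp add: powr_add[symmetric])
    finally show ?thesis by simp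
  qed
  have HI: "H absolutely_integrable_on {0<..}" unfolding H_def by (rule G)
  have A: "(\<lambda>x. complex_of_real n powr (-a) * H (n*x)) absolutely_integrable_on {0<..}"
    by (intro set_integrable_mult_right scale_int(1)[OF HI n])
  have "(\<lambda>x. complex_of_real x powr a * Q (n*x)) absolutely_integrable_on {0<..} \<longleftrightarrow> (\<lambda>x. complex_of_real n powr (-a) * H (n*x)) absolutely_integrable_on {0<..}"
    by (rule set_integrable_cong) (auto simp: eq)
  with A show "(\<lambda>x. complex_of_real x powr a * Q (n*x)) absolutely_integrable_on {0<..}" by simp
  have "integral {0<..} (\<lambda>x. complex_of_real x powr a * Q (n*x)) = integral {0<..} (\<lambda>x. complex_of_real n powr (-a) * H (n*x))"
    by (rule integral_cong) (use eq in auto)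
  also have "\<dots> = complex_of_real n powr (-a) * (integral {0<..} H / n)"
    using scale_int(2)[OF HI n] by simp
  finally show "integral {0<..} (\<lambda>x. complex_of_real x powr a * Q (n*x)) = complex_of_real n powr (-a) * (integral {0<..} (\<lambda>y. complex_of_real y powr a * Q y) / n)"
    by (simp add: H_def[abs_def])
qed

context msetup begin

lemma P_zero:
  assumes z: "zeta s = 0"
  shows "integral {0<..} (\<lambda>x. complex_of_real x powr (s-1) * muntz f x) = 0"
proof -
  define IP where "IP = integral {0<..} (\<lambda>x. complex_of_real x powr (s-1) * muntz f x)"
  have lim: "(\<lambda>N. integral {0<..} (T N)) \<longlonglongrightarrow> IP" unfolding IP_def by (rule P_int(2))
  have s1': "1 - s \<noteq> 0" using s2 by auto
  have TI: "integral {0<..} (T N) = fh * (Hs s N - of_nat N powr (1-s) / (1-s))" for N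
  proof -
    have "(\<Sum>n\<in>{1..N}. fh / complex_of_real (real n) powr s) = fh * Hs s N"
      unfolding Hs_def by (simp add: sum_distrib_left)
    then show ?thesis using s1' by (simp add: T_int(2) K_eq field_simps)
  qed
  show ?thesis
  proof (cases "fh = 0")
    case True
    then have "(\<lambda>N. integral {0<..} (T N)) = (\<lambda>N. 0)" by (simp add: TI fun_eq_iff)
    then have "(\<lambda>N. 0::complex) \<longlonglongrightarrow> IP" using lim by simp
    then have "IP = 0" using LIMSEQ_unique tendsto_const by blast
    then show ?thesis unfolding IP_def .
  next
    case False
    note nz = this
    have "(\<lambda>N. integral {0<..} (T N) / fh) \<longlonglongrightarrow> IP / fh" by (rule tendsto_divide[OF lim tendsto_const nz])
    moreover have "(\<lambda>N. integral {0<..} (T N) / fh) = (\<lambda>N. Hs s N - of_nat N powr (1-s) / (1-s))"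
      using nz by (simp add: TI fun_eq_iff)
    ultimately have "(\<lambda>N. Hs s N - of_nat N powr (1-s) / (1-s)) \<longlonglongrightarrow> IP / fh" by simp
    from zeta_from_limit[OF _ s2 this] s1 have "zeta s = IP / fh" by simp
    then have "IP = 0" using z nz by simp
    then show ?thesis unfolding IP_def .
  qed
qed

lemma Bspan_int:
  assumes z: "zeta s = 0" and h: "h \<in> Bspan (muntz f)"
  shows "(\<lambda>x. complex_of_real x powr (s-1) * h x) absolutely_integrable_on {0<..}"
    "integral {0<..} (\<lambda>x. complex_of_real x powr (s-1) * h x) = 0"
proof -
  from h obtain N cn where hd: "h = (\<lambda>x. \<Sum>n\<in>{1..N}. cn n * dil (real n) (muntz f) x)"
    unfolding Bspan_def by blast
  have e: "complex_of_real x powr (s-1) * h x = (\<Sum>n\<in>{1..N}. cn n * (complex_of_real x powr (s-1) * muntz f (real n * x)))" for x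
    unfolding hd dil_def by (simp add: sum_distrib_left mult_ac)
  have PI: "(\<lambda>y. complex_of_real y powr (s-1) * muntz f y) absolutely_integrable_on {0<..}" by (rule P_int(1))
  have each: "(\<lambda>x. cn n * (complex_of_real x powr (s-1) * muntz f (real n * x))) absolutely_integrable_on {0<..}"
     "integral {0<..} (\<lambda>x. cn n * (complex_of_real x powr (s-1) * muntz f (real n * x))) = 0"
    if "n \<in> {1..N}" for n
  proof -
    have n: "0 < real n" using that by simp
    show "(\<lambda>x. cn n * (complex_of_real x powr (s-1) * muntz f (real n * x))) absolutely_integrable_on {0<..}"
      by (intro set_integrable_mult_right cpow_scale(1)[OF PI n])
    show "integral {0<..} (\<lambda>x. cn n * (complex_of_real x powr (s-1) * muntz f (real n * x))) = 0"
      using cpow_scale(2)[OF PI n] P_zero[OF z] by simp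
  qed
  show "(\<lambda>x. complex_of_real x powr (s-1) * h x) absolutely_integrable_on {0<..}"
    unfolding e by (intro absolutely_integrable_sum each(1)) auto
  show "integral {0<..} (\<lambda>x. complex_of_real x powr (s-1) * h x) = 0"
  proof -
    have "integral {0<..} (\<lambda>x. \<Sum>n\<in>{1..N}. cn n * (complex_of_real x powr (s-1) * muntz f (real n * x)))
        = (\<Sum>n\<in>{1..N}. integral {0<..} (\<lambda>x. cn n * (complex_of_real x powr (s-1) * muntz f (real n * x))))"
      by (rule integral_sum) (simp, rule absint_int[OF each(1)], assumption)
    also have "\<dots> = 0" by (rule sum.neutral) (use each(2) in blast)
    finally show ?thesis unfolding e .
  qed
qed

end

lemma amgm: fixes a b d :: real assumes "0 < d" shows "a * b \<le> (d * a^2 + b^2 / d) / 2"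
proof -
  have "0 \<le> (d*a - b)^2" by simp
  then have "2 * (a*b) * d \<le> d*d*a^2 + b^2" by (simp add: power2_eq_square algebra_simps)
  then show ?thesis using assms by (simp add: field_simps power2_eq_square)
qed

lemma eps_lemma:
  fixes z Q :: real
  assumes Q: "0 \<le> Q" and H: "\<And>d e. 0 < d \<Longrightarrow> 0 < e \<Longrightarrow> z \<le> d * Q + e / d"
  shows "z \<le> 0"
proof (rule ccontr)
  assume "\<not> z \<le> 0"
  then have z: "0 < z" by simp
  define d where "d = z / (2 * (Q + 1))"
  have d: "0 < d" unfolding d_def using z Q by simp
  have dQ: "d * Q \<le> z / 2"
  proof -
    have "d * Q = (z / 2) * (Q / (Q + 1))" unfolding d_def using Q by (simp add: field_simps)
    also have "\<dots> \<le> (z / 2) * 1" using z Q by (intro mult_left_mono) auto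
    finally show ?thesis by simp
  qed
  have "z \<le> d * Q + (d * z / 4) / d" by (rule H[OF d]) (use d z in simp)
  also have "(d * z / 4) / d = z / 4" using d by simp
  finally show False using dQ z by simp
qed

context msetup begin

lemma muntz_tail:
  assumes y: "R \<le> y"
  shows "muntz f y = - (complex_of_real (1/y) * c)"
proof -
  have y0: "0 < y" using y R by simp
  have "(\<Sum>n. f (real (Suc n) * y)) = 0"
  proof -
    have "(\<Sum>n. f (real (Suc n) * y)) = (\<Sum>n\<in>{}. f (real (Suc n) * y))"
    proof (rule suminf_finite)
      fix n :: nat
      have "y \<le> real (Suc n) * y" using y0 by simp
      then show "f (real (Suc n) * y) = 0" using y by (intro supp) simp
    qed simp
    then show ?thesis by simp
  qed
  then show ?thesis unfolding muntz_def c_def by simp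
qed

lemma main_loc:
  assumes z: "zeta s = 0" and cl: "in_L2_closure f (Bspan (muntz f))"
  shows "fh = 0"
proof -
  define \<sigma> where "\<sigma> = Re s"
  have sg: "1/2 < \<sigma>" "\<sigma> < 1" using s1 s2 unfolding \<sigma>_def by auto
  have R0: "0 < R" using R by simp
  define A0 where "A0 = R powr (2*\<sigma>-1) / (2*\<sigma>-1)"
  define B0 where "B0 = R powr (\<sigma>-1) / (1-\<sigma>)"
  have A0p: "0 \<le> A0" unfolding A0_def using sg by simp
  have B0p: "0 \<le> B0" unfolding B0_def using sg by simp
  have key: "norm fh \<le> d * ((A0 + R * B0^2) / 2) + e / d" if d: "0 < d" and e: "0 < e" for d e
  proof -
    from cl e obtain h where hB: "h \<in> Bspan (muntz f)"
      and hI: "(\<lambda>x. (norm (f x - h x))\<^sup>2) integrable_on {0<..}"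
      and hE: "integral {0<..} (\<lambda>x. (norm (f x - h x))\<^sup>2) < e"
      unfolding in_L2_closure_def by blast
    define w where "w x = (norm (f x - h x))\<^sup>2" for x
    have wI: "w integrable_on {0<..}" using hI unfolding w_def[abs_def] .
    have wE: "integral {0<..} w < e" using hE unfolding w_def[abs_def] .
    have wabs: "w absolutely_integrable_on {0<..}"
      by (rule nonnegative_absolutely_integrable_1[OF wI]) (simp add: w_def)
    define v where "v x = complex_of_real x powr (s-1) * (f x - h x)" for x
    have vabs: "v absolutely_integrable_on {0<..}"
    proof -
      have "(\<lambda>x. complex_of_real x powr (s-1) * f x - complex_of_real x powr (s-1) * h x) absolutely_integrable_on {0<..}"
        by (rule set_integral_diff(1)[OF MF_int Bspan_int(1)[OF z hB]])
      then show ?thesis unfolding v_def[abs_def] by (simp add: right_diff_distrib)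
    qed
    have vint: "integral {0<..} v = fh"
    proof -
      have "integral {0<..} (\<lambda>x. complex_of_real x powr (s-1) * f x - complex_of_real x powr (s-1) * h x)
          = integral {0<..} (\<lambda>x. complex_of_real x powr (s-1) * f x) - integral {0<..} (\<lambda>x. complex_of_real x powr (s-1) * h x)"
        by (rule integral_diff[OF absint_int[OF MF_int] absint_int[OF Bspan_int(1)[OF z hB]]])
      then show ?thesis unfolding v_def[abs_def] fh_def using Bspan_int(2)[OF z hB] by (simp add: right_diff_distrib)
    qed
    define S1 where "S1 = {0<..<R}"
    define S2 where "S2 = {R..}"
    have S1s: "S1 \<subseteq> {0<..}" "S1 \<in> sets lebesgue" unfolding S1_def by auto
    have S2s: "S2 \<subseteq> {0<..}" "S2 \<in> sets lebesgue" unfolding S2_def using R0 by auto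
    have v1: "v integrable_on S1" by (rule absint_int, rule set_integrable_subset[OF vabs S1s(2) S1s(1)])
    have v2: "v integrable_on S2" by (rule absint_int, rule set_integrable_subset[OF vabs S2s(2) S2s(1)])
    have w1: "w integrable_on S1"
      by (rule set_lebesgue_integral_eq_integral(1), rule set_integrable_subset[OF wabs S1s(2) S1s(1)])
    have "S1 \<inter> S2 = {}" unfolding S1_def S2_def by auto
    then have neg: "negligible (S1 \<inter> S2)" by simp
    have "(v has_integral (integral S1 v + integral S2 v)) (S1 \<union> S2)"
      by (rule has_integral_Un[OF integrable_integral[OF v1] integrable_integral[OF v2] neg])
    moreover have "S1 \<union> S2 = {0<..}" unfolding S1_def S2_def using R0 by auto
    ultimately have "(v has_integral (integral S1 v + integral S2 v)) {0<..}" by simp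
    then have fsplit: "fh = integral S1 v + integral S2 v" using vint integral_unique by metis
    define g1 where "g1 x = (d * x powr (2*\<sigma>-2) + w x / d) / 2" for x
    have p1: "((\<lambda>x. x powr (2*\<sigma>-2)) has_integral A0) S1"
    proof -
      have "((\<lambda>x. x powr (2*\<sigma>-2)) has_integral (R powr (2*\<sigma>-2+1) / (2*\<sigma>-2+1))) {0..R}"
        by (rule has_integral_powr_from_0) (use sg R0 in auto)
      then have "((\<lambda>x. x powr (2*\<sigma>-2)) has_integral A0) {0..R}"
        unfolding A0_def by (simp add: algebra_simps)
      then show ?thesis unfolding S1_def using has_integral_open_interval[of _ A0 0 R] by simp
    qed
    have g1h: "(g1 has_integral ((d * A0 + integral S1 w / d) / 2)) S1"
      unfolding g1_def[abs_def]
      by (intro has_integral_divide has_integral_add has_integral_mult_right integrable_integral w1 p1)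
    have g1I: "g1 integrable_on S1" using g1h by (auto simp: integrable_on_def)
    have g1int: "integral S1 g1 = (d * A0 + integral S1 w / d) / 2" using g1h by (rule integral_unique)
    have wS1: "integral S1 w \<le> integral {0<..} w"
      by (rule integral_subset_le[OF S1s(1) w1 wI]) (simp add: w_def)
    have b1: "norm (integral S1 v) \<le> integral S1 g1"
    proof (rule integral_norm_bound_integral[OF v1 g1I])
      fix x assume "x \<in> S1"
      then have x: "0 < x" unfolding S1_def by simp
      have "norm (v x) = x powr (\<sigma>-1) * norm (f x - h x)"
        unfolding v_def \<sigma>_def using x by (simp add: norm_cpow_mult)
      also have "\<dots> \<le> (d * (x powr (\<sigma>-1))^2 + (norm (f x - h x))^2 / d) / 2"
        by (rule amgm[OF d])
      also have "(x powr (\<sigma>-1))^2 = x powr (2*\<sigma>-2)"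
        by (simp add: power2_eq_square powr_add[symmetric])
      finally show "norm (v x) \<le> g1 x" unfolding g1_def w_def by simp
    qed
    have part1: "norm (integral S1 v) \<le> (d * A0 + e / d) / 2"
    proof -
      have "integral S1 w / d \<le> e / d" using wS1 wE d by (intro divide_right_mono) auto
      then show ?thesis using b1 g1int by simp
    qed
    from hB obtain N cn where hd: "h = (\<lambda>x. \<Sum>n\<in>{1..N}. cn n * dil (real n) (muntz f) x)"
      unfolding Bspan_def by blast
    define C where "C = c * (\<Sum>n\<in>{1..N}. cn n / complex_of_real (real n))"
    have eqR: "f x - h x = C * complex_of_real (1/x)" if x: "R \<le> x" for x
    proof -
      have "h x = (\<Sum>n\<in>{1..N}. cn n * (- (complex_of_real (1/(real n * x)) * c)))"
        unfolding hd dil_def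
      proof (rule sum.cong[OF refl])
        fix n assume "n \<in> {1..N}"
        then have "x \<le> real n * x" using x R by simp
        then show "cn n * muntz f (real n * x) = cn n * (- (complex_of_real (1/(real n * x)) * c))"
          using x by (simp add: muntz_tail)
      qed
      also have "\<dots> = - (C * complex_of_real (1/x))"
        unfolding C_def by (simp add: sum_distrib_left sum_distrib_right sum_negf[symmetric] field_simps)
      finally show ?thesis using supp[OF x] by simp
    qed
    have p2: "((\<lambda>x. x powr (\<sigma>-2)) has_integral B0) S2"
    proof -
      have "((\<lambda>x. x powr (\<sigma>-2)) has_integral -(R powr (\<sigma>-2+1)) / (\<sigma>-2+1)) {R..}"
        by (rule has_integral_powr_to_inf) (use sg R0 in auto)
      moreover have "-(R powr (\<sigma>-2+1)) / (\<sigma>-2+1) = B0"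
        unfolding B0_def using sg by (simp add: field_simps)
      ultimately show ?thesis unfolding S2_def by simp
    qed
    have p3: "((\<lambda>x. x powr (-2)) has_integral (1/R)) S2"
    proof -
      have "((\<lambda>x. x powr (-2)) has_integral -(R powr (-2+1)) / (-2+1)) {R..}"
        by (rule has_integral_powr_to_inf) (use R0 in auto)
      moreover have "-(R powr (-2+1)) / (-2+1) = 1/R"
        using R0 by (simp add: powr_minus_divide)
      ultimately show ?thesis unfolding S2_def by simp
    qed
    have b2: "norm (integral S2 v) \<le> norm C * B0"
    proof -
      have "norm (integral S2 v) \<le> integral S2 (\<lambda>x. norm C * x powr (\<sigma>-2))"
      proof (rule integral_norm_bound_integral[OF v2])
        show "(\<lambda>x. norm C * x powr (\<sigma>-2)) integrable_on S2"
          using p2 by (intro integrable_on_mult_right) (auto simp: integrable_on_def)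
        fix x assume "x \<in> S2"
        then have x: "R \<le> x" "0 < x" unfolding S2_def using R0 by auto
        have "norm (v x) = x powr (\<sigma>-1) * (norm C * (1/x))"
          unfolding v_def \<sigma>_def using x by (simp add: eqR norm_mult norm_divide norm_cpow)
        also have "x powr (\<sigma>-1) * (1/x) = x powr (\<sigma>-2)"
        proof -
          have "x powr (\<sigma>-2) = x powr ((\<sigma>-1) - 1)"
            by (rule arg_cong[where f="\<lambda>e. x powr e"]) simp
          also have "\<dots> = x powr (\<sigma>-1) / x powr 1" by (rule powr_diff)
          finally show ?thesis using x by simp
        qed
        then have "x powr (\<sigma>-1) * (norm C * (1/x)) = norm C * x powr (\<sigma>-2)"
          by (metis mult.left_commute)
        finally show "norm (v x) \<le> norm C * x powr (\<sigma>-2)" by simp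
      qed
      also have "\<dots> = norm C * B0" using p2 by (simp add: integral_unique)
      finally show ?thesis .
    qed
    have Cb: "(norm C)^2 / R \<le> e"
    proof -
      have ww: "w x = (norm C)^2 * x powr (-2)" if "x \<in> S2" for x
      proof -
        have x: "R \<le> x" "0 < x" using that R0 unfolding S2_def by auto
        have "w x = (norm C * (1/x))^2" unfolding w_def using x by (simp add: eqR norm_mult norm_divide)
        also have "\<dots> = (norm C)^2 * x powr (-2)"
          using x by (simp add: power_mult_distrib powr_minus_divide powr_realpow power_divide)
        finally show ?thesis .
      qed
      have hw: "(w has_integral ((norm C)^2 * (1/R))) S2"
      proof (rule has_integral_eq[where f="\<lambda>x. (norm C)^2 * x powr (-2)"])
        show "((\<lambda>x. (norm C)^2 * x powr (-2)) has_integral ((norm C)^2 * (1/R))) S2"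
          by (rule has_integral_mult_right[OF p3])
        fix x assume "x \<in> S2" then show "(norm C)^2 * x powr (-2) = w x" by (simp add: ww)
      qed
      have w2: "w integrable_on S2" using hw unfolding integrable_on_def by blast
      have "integral S2 w \<le> integral {0<..} w"
        by (rule integral_subset_le[OF S2s(1) w2 wI]) (simp add: w_def)
      moreover have "integral S2 w = (norm C)^2 * (1/R)" using hw by (rule integral_unique)
      ultimately have "(norm C)^2 * (1/R) \<le> e" using wE by linarith
      then show ?thesis by simp
    qed
    have part2: "norm (integral S2 v) \<le> (R * d * B0^2 + e / d) / 2"
    proof -
      have "norm C * B0 = B0 * norm C" by simp
      also have "\<dots> \<le> ((R * d) * B0^2 + (norm C)^2 / (R * d)) / 2"
        by (rule amgm) (use R0 d in simp)
      also have "(norm C)^2 / (R * d) = ((norm C)^2 / R) / d" by simp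
      also have "\<dots> \<le> e / d" using Cb d by (intro divide_right_mono) auto
      finally show ?thesis using b2 by simp
    qed
    have "norm fh \<le> norm (integral S1 v) + norm (integral S2 v)"
      unfolding fsplit by (rule norm_triangle_ineq)
    also have "\<dots> \<le> (d * A0 + e / d) / 2 + (R * d * B0^2 + e / d) / 2"
      using part1 part2 by linarith
    also have "\<dots> = d * ((A0 + R * B0^2) / 2) + e / d" by (simp add: field_simps)
    finally show ?thesis .
  qed
  have "norm fh \<le> 0"
    by (rule eps_lemma[OF _ key]) (use A0p B0p R0 in auto)
  then show ?thesis by simp
qed

end

theorem mainTheorem2:
  fixes f :: "real \<Rightarrow> complex"
  assumes "good_kernel f"
    and "\<exists>R. \<forall>x>R. f x = 0"
    and "in_L2_closure f (Bspan (muntz f))"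
  shows "{s. zeta s = 0 \<and> 1/2 < Re s \<and> Re s < 1} \<subseteq> {s. mellin f s = 0 \<and> 1/2 < Re s \<and> Re s < 1}"
proof
  fix s assume s: "s \<in> {s. zeta s = 0 \<and> 1/2 < Re s \<and> Re s < 1}"
  from assms(1) obtain f' where deriv: "\<forall>x\<ge>0. (f has_vector_derivative f' x) (at x within {0..})"
    and cont: "continuous_on {0..} f'"
    unfolding good_kernel_def by blast
  from assms(2) obtain R0 where R0: "\<forall>x>R0. f x = 0" by blast
  define R where "R = max 1 (R0 + 1)"
  have supp: "f x = 0" if "x \<ge> R" for x
    using R0 that unfolding R_def by auto
  interpret m: msetup f f' R s
    by unfold_locales (use deriv cont supp s in \<open>auto simp: R_def\<close>)
  have "m.fh = 0" by (rule m.main_loc) (use s assms(3) in auto)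
  then show "s \<in> {s. mellin f s = 0 \<and> 1/2 < Re s \<and> Re s < 1}"
    using s by (simp add: mellin_def m.fh_def)
qed

end
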